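(* Let $n\ge2$, $h\in(0,1]$, and for $0\le p\le2n$ let $\mathcal M_p$ be the set of minimizers of $H$ on $\mathcal C(p)$. (a) Suppose $0\le\epsilon\le1$. Let $p^*_1=\frac n2$ if $n$ is even, $p^*_1=\frac{n+1}2$ if $n$ is odd and $h\le\epsilon$, $p^*_1=\frac{n-1}2$ if $n$ is odd and $\epsilon<h$. Then the maximum of $H$ over $\bigcup_{0\le p\le2n}\mathcal M_p$ is attained by the configurations in $C(p^*_1,0,0)\cup C(0,p^*_1,0)$, and $\Gamma_m\ge\Gamma^1_m$, where $\Gamma^1_m=\frac{n^2}2+n(\epsilon-h)$ if $n$ is even, $\Gamma^1_m=\frac{n^2-1}2+(n+1)(\epsilon-h)$ if $n$ is odd and $h\le\epsilon$, $\Gamma^1_m=\frac{n^2-1}2+(n-1)(\epsilon-h)$ if $n$ is odd and $\epsilon<h$. (b) Suppose $0<-\epsilon<h$. Let $p^*_2=\frac{3n}2$ if $n$ is even and $p^*_2=\frac{3n-1}2$ if $n$ is odd. Then the maximum of $H$ over $\bigcup_{n\le p\le2n}\mathcal M_p$ is attained by the configurations in $C(n,p^*_2-n,p^*_2-n)\cup C(p^*_2-n,n,p^*_2-n)$, and $\Gamma_m\ge\Gamma^2_m$, where $\Gamma^2_m=\frac{n^2}2-n(\epsilon+h)$ if $n$ is even and $\Gamma^2_m=\frac{n^2-1}2-(n-1)(\epsilon+h)$ if $n$ is odd.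
   Context: Setup. The graph $\mathcal G(2,n)$ has vertex set $V=V^{(1)}\cup V^{(2)}$ with $V^{(1)}=\{1,\dots,n\}$, $V^{(2)}=\{n+1,\dots,2n\}$; its edge set is $E=E_{\mathrm{int}}\cup E_{\mathrm{cross}}$, where $E_{\mathrm{int}}$ consists of all pairs of distinct vertices in the same $V^{(k)}$ and $E_{\mathrm{cross}}=\{\{i,i+n\}:1\le i\le n\}$. The configuration space is $\mathcal X=\{-1,+1\}^V$ and $H(\sigma)=-\sum_{\{i,j\}\in E_{\mathrm{int}}}\sigma_i\sigma_j-\epsilon\sum_{\{i,j\}\in E_{\mathrm{cross}}}\sigma_i\sigma_j-h\sum_{i\in V}\sigma_i$, $\epsilon\in[-1,1]$. $C(p_1,p_2,a)$ is the set of configurations with exactly $p_1$ vertices of spin $+1$ in $V^{(1)}$, exactly $p_2$ vertices of spin $+1$ in $V^{(2)}$, and exactly $a$ cross-edges both of whose endpoints have spin $+1$. $\mathcal C(p)$ is the set of configurations with exactly $p$ vertices of spin $+1$. Energy landscape. Paths are sequences of configurations in which consecutive ones differ at exactly one vertex; $\Phi(\eta,\eta')=\min_{\omega:\eta\to\eta'}\max_{\zeta\in\omega}H(\zeta)$, $\Phi(\eta,A)=\min_{\eta'\in A}\Phi(\eta,\eta')$. The stability level is $V_\zeta=\Phi(\zeta,\{\eta:H(\eta)<H(\zeta)\})-H(\zeta)$ ($\infty$ if that set is empty). $\mathcal X_s$ is the set of global minimizers of $H$, and $\Gamma_m=\max_{\zeta\in\mathcal X\setminus\mathcal X_s}V_\zeta$.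 *)

theory Defs
  imports Complex_Main "HOL-Library.Extended_Real"
begin

text \<open>Graph G(2,n): vertices 1..2n; block 1 = {1..n}, block 2 = {n+1..2n};
  internal edges: distinct vertices in the same block; cross edges {i, i+n}.\<close>

definition Vtx :: "nat \<Rightarrow> nat set" where
  "Vtx n = {1..2*n}"

definition same_block :: "nat \<Rightarrow> nat \<Rightarrow> nat \<Rightarrow> bool" where
  "same_block n i j \<longleftrightarrow> ((i \<le> n) = (j \<le> n))"

definition config :: "nat \<Rightarrow> (nat \<Rightarrow> int) \<Rightarrow> bool" where
  "config n \<sigma> \<longleftrightarrow> (\<forall>i\<in>Vtx n. \<sigma> i = 1 \<or> \<sigma> i = -1) \<and> (\<forall>i. i \<notin> Vtx n \<longrightarrow> \<sigma> i = 0)"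

definition Xcfg :: "nat \<Rightarrow> (nat \<Rightarrow> int) set" where
  "Xcfg n = {\<sigma>. config n \<sigma>}"

definition Ham :: "nat \<Rightarrow> real \<Rightarrow> real \<Rightarrow> (nat \<Rightarrow> int) \<Rightarrow> real" where
  "Ham n \<epsilon> h \<sigma> =
     - (\<Sum>i\<in>Vtx n. \<Sum>j\<in>Vtx n. if i < j \<and> same_block n i j then real_of_int (\<sigma> i * \<sigma> j) else 0)
     - \<epsilon> * (\<Sum>i\<in>{1..n}. real_of_int (\<sigma> i * \<sigma> (i + n)))
     - h * (\<Sum>i\<in>Vtx n. real_of_int (\<sigma> i))"

definition Cset :: "nat \<Rightarrow> nat \<Rightarrow> nat \<Rightarrow> nat \<Rightarrow> (nat \<Rightarrow> int) set" where
  "Cset n p1 p2 a = {\<sigma>. config n \<sigma>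
       \<and> card {i\<in>{1..n}. \<sigma> i = 1} = p1
       \<and> card {i\<in>{n+1..2*n}. \<sigma> i = 1} = p2
       \<and> card {i\<in>{1..n}. \<sigma> i = 1 \<and> \<sigma> (i + n) = 1} = a}"

definition Cp :: "nat \<Rightarrow> nat \<Rightarrow> (nat \<Rightarrow> int) set" where
  "Cp n p = {\<sigma>. config n \<sigma> \<and> card {i\<in>Vtx n. \<sigma> i = 1} = p}"

definition Mp :: "nat \<Rightarrow> real \<Rightarrow> real \<Rightarrow> nat \<Rightarrow> (nat \<Rightarrow> int) set" where
  "Mp n \<epsilon> h p = {\<sigma>\<in>Cp n p. \<forall>\<tau>\<in>Cp n p. Ham n \<epsilon> h \<sigma> \<le> Ham n \<epsilon> h \<tau>}"

definition is_path :: "nat \<Rightarrow> (nat \<Rightarrow> int) list \<Rightarrow> (nat \<Rightarrow> int) \<Rightarrow> (nat \<Rightarrow> int) \<Rightarrow> bool" where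
  "is_path n \<omega> \<eta> \<eta>' \<longleftrightarrow> \<omega> \<noteq> [] \<and> hd \<omega> = \<eta> \<and> last \<omega> = \<eta>'
     \<and> (\<forall>\<zeta>\<in>set \<omega>. config n \<zeta>)
     \<and> (\<forall>k. Suc k < length \<omega> \<longrightarrow> card {i. (\<omega> ! k) i \<noteq> (\<omega> ! Suc k) i} = 1)"

definition Phi :: "nat \<Rightarrow> real \<Rightarrow> real \<Rightarrow> (nat \<Rightarrow> int) \<Rightarrow> (nat \<Rightarrow> int) \<Rightarrow> real" where
  "Phi n \<epsilon> h \<eta> \<eta>' = Inf {Max (Ham n \<epsilon> h ` set \<omega>) | \<omega>. is_path n \<omega> \<eta> \<eta>'}"

definition PhiSet :: "nat \<Rightarrow> real \<Rightarrow> real \<Rightarrow> (nat \<Rightarrow> int) \<Rightarrow> (nat \<Rightarrow> int) set \<Rightarrow> real" where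
  "PhiSet n \<epsilon> h \<eta> A = Inf {Phi n \<epsilon> h \<eta> \<eta>' | \<eta>'. \<eta>' \<in> A}"

definition stab :: "nat \<Rightarrow> real \<Rightarrow> real \<Rightarrow> (nat \<Rightarrow> int) \<Rightarrow> ereal" where
  "stab n \<epsilon> h \<zeta> =
     (let L = {\<eta>\<in>Xcfg n. Ham n \<epsilon> h \<eta> < Ham n \<epsilon> h \<zeta>} in
      if L = {} then \<infinity> else ereal (PhiSet n \<epsilon> h \<zeta> L - Ham n \<epsilon> h \<zeta>))"

definition Xs :: "nat \<Rightarrow> real \<Rightarrow> real \<Rightarrow> (nat \<Rightarrow> int) set" where
  "Xs n \<epsilon> h = {\<sigma>\<in>Xcfg n. \<forall>\<tau>\<in>Xcfg n. Ham n \<epsilon> h \<sigma> \<le> Ham n \<epsilon> h \<tau>}"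

definition Gamma_m :: "nat \<Rightarrow> real \<Rightarrow> real \<Rightarrow> ereal" where
  "Gamma_m n \<epsilon> h = Sup (stab n \<epsilon> h ` (Xcfg n - Xs n \<epsilon> h))"

definition pstar1 :: "nat \<Rightarrow> real \<Rightarrow> real \<Rightarrow> nat" where
  "pstar1 n \<epsilon> h = (if even n then n div 2 else if h \<le> \<epsilon> then (n + 1) div 2 else (n - 1) div 2)"

definition Gamma1 :: "nat \<Rightarrow> real \<Rightarrow> real \<Rightarrow> real" where
  "Gamma1 n \<epsilon> h = (if even n then real n ^ 2 / 2 + real n * (\<epsilon> - h)
     else if h \<le> \<epsilon> then (real n ^ 2 - 1) / 2 + (real n + 1) * (\<epsilon> - h)
     else (real n ^ 2 - 1) / 2 + (real n - 1) * (\<epsilon> - h))"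

definition pstar2 :: "nat \<Rightarrow> nat" where
  "pstar2 n = (if even n then 3 * n div 2 else (3 * n - 1) div 2)"

definition Gamma2 :: "nat \<Rightarrow> real \<Rightarrow> real \<Rightarrow> real" where
  "Gamma2 n \<epsilon> h = (if even n then real n ^ 2 / 2 - real n * (\<epsilon> + h)
     else (real n ^ 2 - 1) / 2 - (real n - 1) * (\<epsilon> + h))"

end

theory Submission
  imports Defs
begin



definition P1 :: "nat \<Rightarrow> (nat \<Rightarrow> int) \<Rightarrow> nat" where "P1 n \<sigma> = card {i\<in>{1..n}. \<sigma> i = 1}"
definition P2 :: "nat \<Rightarrow> (nat \<Rightarrow> int) \<Rightarrow> nat" where "P2 n \<sigma> = card {i\<in>{n+1..2*n}. \<sigma> i = 1}"
definition AA :: "nat \<Rightarrow> (nat \<Rightarrow> int) \<Rightarrow> nat" where "AA n \<sigma> = card {i\<in>{1..n}. \<sigma> i = 1 \<and> \<sigma> (i+n) = 1}"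
definition PP :: "nat \<Rightarrow> (nat \<Rightarrow> int) \<Rightarrow> nat" where "PP n \<sigma> = card {i\<in>Vtx n. \<sigma> i = 1}"

definition FF :: "nat \<Rightarrow> real \<Rightarrow> real \<Rightarrow> nat \<Rightarrow> nat \<Rightarrow> nat \<Rightarrow> real" where
 "FF n e h p1 p2 a = -(((2*real p1 - real n)^2 + (2*real p2 - real n)^2 - 2*real n)/2)
    - e*(real n - 2*real p1 - 2*real p2 + 4*real a) - h*(2*real p1 + 2*real p2 - 2*real n)"

lemma Vtx_split: "Vtx n = {1..n} \<union> {n+1..2*n}" "{1..n} \<inter> {n+1..2*n} = {}"
  by (auto simp: Vtx_def)

lemma P2_alt: "P2 n \<sigma> = card {i\<in>{1..n}. \<sigma> (i+n) = 1}"
proof -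
  have "{i\<in>{n+1..2*n}. \<sigma> i = 1} = (\<lambda>i. i+n) ` {i\<in>{1..n}. \<sigma> (i+n) = 1}"
  proof (intro equalityI subsetI)
    fix x assume "x \<in> {i\<in>{n+1..2*n}. \<sigma> i = 1}"
    then show "x \<in> (\<lambda>i. i+n) ` {i\<in>{1..n}. \<sigma> (i+n) = 1}" by (intro image_eqI[where x="x-n"]) auto
  qed auto
  moreover have "inj_on (\<lambda>i. i+n) A" for A by (auto simp: inj_on_def)
  ultimately show ?thesis unfolding P2_def by (simp add: card_image)
qed

lemma PP_split: "PP n \<sigma> = P1 n \<sigma> + P2 n \<sigma>"
proof -
  have "{i\<in>Vtx n. \<sigma> i = 1} = {i\<in>{1..n}. \<sigma> i = 1} \<union> {i\<in>{n+1..2*n}. \<sigma> i = 1}"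
    by (auto simp: Vtx_def)
  then show ?thesis unfolding PP_def P1_def P2_def
    by (simp add: card_Un_disjoint Vtx_split disjoint_iff)
qed

lemma card_filter_sum: "finite A \<Longrightarrow> real (card {i\<in>A. P i}) = (\<Sum>i\<in>A. if P i then 1 else 0)"
  by (simp add: sum.inter_filter[symmetric])

lemma spin_val: "config n \<sigma> \<Longrightarrow> i \<in> Vtx n \<Longrightarrow> real_of_int (\<sigma> i) = 2 * (if \<sigma> i = 1 then 1 else 0) - 1"
  unfolding config_def by force

lemma sum_block: assumes "config n \<sigma>" and "B \<subseteq> Vtx n"
  shows "(\<Sum>i\<in>B. real_of_int (\<sigma> i)) = 2 * real (card {i\<in>B. \<sigma> i = 1}) - real (card B)"
proof -
  have fB: "finite B" using assms(2) finite_subset by (auto simp: Vtx_def)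
  have "(\<Sum>i\<in>B. real_of_int (\<sigma> i)) = (\<Sum>i\<in>B. 2 * (if \<sigma> i = 1 then 1 else 0) - 1)"
    using assms by (intro sum.cong refl) (metis spin_val subsetD)
  also have "\<dots> = 2 * (\<Sum>i\<in>B. (if \<sigma> i = 1 then 1 else 0)) - real (card B)"
    by (simp add: sum_subtractf sum_distrib_left)
  finally show ?thesis using card_filter_sum[OF fB] by simp
qed

lemma internal_sum:
  assumes "config n \<sigma>"
  shows "(\<Sum>i\<in>Vtx n. \<Sum>j\<in>Vtx n. if i < j \<and> same_block n i j then real_of_int (\<sigma> i * \<sigma> j) else 0)
    = ((\<Sum>i\<in>{1..n}. real_of_int (\<sigma> i))^2 + (\<Sum>i\<in>{n+1..2*n}. real_of_int (\<sigma> i))^2 - 2 * real n) / 2"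
proof -
  define V where "V = Vtx n"
  define f where "f i j = real_of_int (\<sigma> i * \<sigma> j)" for i j
  define x where "x i = real_of_int (\<sigma> i)" for i
  define s1 where "s1 = (\<Sum>i\<in>{1..n}. x i)"
  define s2 where "s2 = (\<Sum>i\<in>{n+1..2*n}. x i)"
  define T where "T = (\<Sum>i\<in>V. \<Sum>j\<in>V. if i < j \<and> same_block n i j then f i j else 0)"
  have fV: "finite V" by (simp add: V_def Vtx_def)
  have sbs: "same_block n i j = same_block n j i" for i j by (auto simp: same_block_def)
  have fs: "f i j = f j i" for i j by (simp add: f_def mult.commute)
  have pw: "(if same_block n i j then f i j else 0) = (if i < j \<and> same_block n i j then f i j else 0)
     + (if j < i \<and> same_block n j i then f j i else 0) + (if i = j then f i i else 0)" for i j
    using fs[of i j] sbs[of i j] by (cases i j rule: linorder_cases) (auto simp: same_block_def)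
  have "(\<Sum>i\<in>V. \<Sum>j\<in>V. if same_block n i j then f i j else 0)
     = T + (\<Sum>i\<in>V. \<Sum>j\<in>V. if j < i \<and> same_block n j i then f j i else 0)
         + (\<Sum>i\<in>V. \<Sum>j\<in>V. if i = j then f i i else 0)"
    unfolding T_def pw by (simp add: sum.distrib)
  also have "(\<Sum>i\<in>V. \<Sum>j\<in>V. if j < i \<and> same_block n j i then f j i else 0) = T"
    unfolding T_def by (rule sum.swap)
  also have "(\<Sum>i\<in>V. \<Sum>j\<in>V. if i = j then f i i else 0) = (\<Sum>i\<in>V. f i i)"
    using fV by simp
  also have "(\<Sum>i\<in>V. f i i) = (\<Sum>i\<in>V. 1)"
    using assms unfolding config_def f_def V_def by (intro sum.cong refl) auto
  also have "(\<Sum>i\<in>V. (1::real)) = 2 * real n" by (simp add: V_def Vtx_def)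
  finally have full: "(\<Sum>i\<in>V. \<Sum>j\<in>V. if same_block n i j then f i j else 0) = 2 * T + 2 * real n" by simp
  have inner1: "(\<Sum>j\<in>V. if same_block n i j then f i j else 0) = x i * s1" if "i \<in> {1..n}" for i
  proof -
    have "(\<Sum>j\<in>V. if same_block n i j then f i j else 0)
      = (\<Sum>j\<in>{1..n}. if same_block n i j then f i j else 0) + (\<Sum>j\<in>{n+1..2*n}. if same_block n i j then f i j else 0)"
      unfolding V_def Vtx_split by (rule sum.union_disjoint) auto
    also have "(\<Sum>j\<in>{n+1..2*n}. if same_block n i j then f i j else 0) = 0"
      using that by (intro sum.neutral) (auto simp: same_block_def)
    also have "(\<Sum>j\<in>{1..n}. if same_block n i j then f i j else 0) = (\<Sum>j\<in>{1..n}. x i * x j)"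
      using that by (intro sum.cong refl) (auto simp: same_block_def f_def x_def)
    finally show ?thesis by (simp add: s1_def sum_distrib_left)
  qed
  have inner2: "(\<Sum>j\<in>V. if same_block n i j then f i j else 0) = x i * s2" if "i \<in> {n+1..2*n}" for i
  proof -
    have "(\<Sum>j\<in>V. if same_block n i j then f i j else 0)
      = (\<Sum>j\<in>{1..n}. if same_block n i j then f i j else 0) + (\<Sum>j\<in>{n+1..2*n}. if same_block n i j then f i j else 0)"
      unfolding V_def Vtx_split by (rule sum.union_disjoint) auto
    also have "(\<Sum>j\<in>{1..n}. if same_block n i j then f i j else 0) = 0"
      using that by (intro sum.neutral) (auto simp: same_block_def)
    also have "(\<Sum>j\<in>{n+1..2*n}. if same_block n i j then f i j else 0) = (\<Sum>j\<in>{n+1..2*n}. x i * x j)"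
      using that by (intro sum.cong refl) (auto simp: same_block_def f_def x_def)
    finally show ?thesis by (simp add: s2_def sum_distrib_left)
  qed
  have "(\<Sum>i\<in>V. \<Sum>j\<in>V. if same_block n i j then f i j else 0)
     = (\<Sum>i\<in>{1..n}. \<Sum>j\<in>V. if same_block n i j then f i j else 0) + (\<Sum>i\<in>{n+1..2*n}. \<Sum>j\<in>V. if same_block n i j then f i j else 0)"
    unfolding V_def Vtx_split by (rule sum.union_disjoint) auto
  also have "\<dots> = (\<Sum>i\<in>{1..n}. x i * s1) + (\<Sum>i\<in>{n+1..2*n}. x i * s2)"
    using inner1 inner2 by simp
  also have "\<dots> = s1^2 + s2^2" by (simp add: s1_def s2_def sum_distrib_right power2_eq_square)
  finally have "2 * T + 2 * real n = s1^2 + s2^2" using full by simp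
  then have "T = (s1^2 + s2^2 - 2 * real n)/2" by simp
  then show ?thesis unfolding T_def V_def f_def s1_def s2_def x_def .
qed

lemma cross_sum:
  assumes "config n \<sigma>"
  shows "(\<Sum>i\<in>{1..n}. real_of_int (\<sigma> i * \<sigma> (i + n)))
     = 4 * real (AA n \<sigma>) - 2 * real (P1 n \<sigma>) - 2 * real (P2 n \<sigma>) + real n"
proof -
  have pw: "real_of_int (\<sigma> i * \<sigma> (i + n)) = 4 * (if \<sigma> i = 1 \<and> \<sigma> (i+n) = 1 then 1 else 0)
     - 2 * (if \<sigma> i = 1 then 1 else 0) - 2 * (if \<sigma> (i+n) = 1 then 1 else 0) + 1" if "i \<in> {1..n}" for i
  proof -
    have "i \<in> Vtx n" "i + n \<in> Vtx n" using that by (auto simp: Vtx_def)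
    then have "\<sigma> i = 1 \<or> \<sigma> i = -1" "\<sigma> (i+n) = 1 \<or> \<sigma> (i+n) = -1" using assms by (auto simp: config_def)
    then show ?thesis by auto
  qed
  have "(\<Sum>i\<in>{1..n}. real_of_int (\<sigma> i * \<sigma> (i + n))) = (\<Sum>i\<in>{1..n}. 4 * (if \<sigma> i = 1 \<and> \<sigma> (i+n) = 1 then 1 else 0)
     - 2 * (if \<sigma> i = 1 then 1 else 0) - 2 * (if \<sigma> (i+n) = 1 then 1 else 0) + 1)"
    using pw by (intro sum.cong refl) 
  also have "\<dots> = 4 * (\<Sum>i\<in>{1..n}. (if \<sigma> i = 1 \<and> \<sigma> (i+n) = 1 then 1 else 0))
     - 2 * (\<Sum>i\<in>{1..n}. (if \<sigma> i = 1 then 1 else 0)) - 2 * (\<Sum>i\<in>{1..n}. (if \<sigma> (i+n) = 1 then 1 else 0)) + real n"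
    by (simp add: sum.distrib sum_subtractf sum_distrib_left)
  finally show ?thesis
    unfolding AA_def P1_def P2_alt card_filter_sum[OF finite_atLeastAtMost] .
qed

lemma ham_formula:
  assumes "config n \<sigma>"
  shows "Ham n e h \<sigma> = FF n e h (P1 n \<sigma>) (P2 n \<sigma>) (AA n \<sigma>)"
proof -
  have s1: "(\<Sum>i\<in>{1..n}. real_of_int (\<sigma> i)) = 2 * real (P1 n \<sigma>) - real n"
    using sum_block[OF assms, of "{1..n}"] by (simp add: Vtx_def P1_def)
  have s2: "(\<Sum>i\<in>{n+1..2*n}. real_of_int (\<sigma> i)) = 2 * real (P2 n \<sigma>) - real n"
    using sum_block[OF assms, of "{n+1..2*n}"] by (simp add: Vtx_def P2_def)
  have sV: "(\<Sum>i\<in>Vtx n. real_of_int (\<sigma> i)) = (\<Sum>i\<in>{1..n}. real_of_int (\<sigma> i)) + (\<Sum>i\<in>{n+1..2*n}. real_of_int (\<sigma> i))"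
    unfolding Vtx_split by (rule sum.union_disjoint) auto
  show ?thesis
    unfolding Ham_def internal_sum[OF assms] cross_sum[OF assms] sV s1 s2 FF_def by simp
qed

lemma count_bounds:
  assumes "config n \<sigma>"
  shows "P1 n \<sigma> \<le> n" "P2 n \<sigma> \<le> n" "AA n \<sigma> \<le> P1 n \<sigma>" "AA n \<sigma> \<le> P2 n \<sigma>"
        "P1 n \<sigma> + P2 n \<sigma> \<le> n + AA n \<sigma>"
proof -
  let ?X = "{i\<in>{1..n}. \<sigma> i = 1}" and ?Y = "{i\<in>{1..n}. \<sigma> (i+n) = 1}"
  have "card ?X \<le> card {1..n}" by (rule card_mono) auto
  then show "P1 n \<sigma> \<le> n" by (simp add: P1_def)
  have "card ?Y \<le> card {1..n}" by (rule card_mono) auto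
  then show "P2 n \<sigma> \<le> n" by (simp add: P2_alt)
  have "card (?X \<inter> ?Y) \<le> card ?X" by (rule card_mono) auto
  moreover have "?X \<inter> ?Y = {i\<in>{1..n}. \<sigma> i = 1 \<and> \<sigma> (i+n) = 1}" by auto
  ultimately show "AA n \<sigma> \<le> P1 n \<sigma>" by (simp add: AA_def P1_def)
  have "card (?X \<inter> ?Y) \<le> card ?Y" by (rule card_mono) auto
  then show "AA n \<sigma> \<le> P2 n \<sigma>" using \<open>?X \<inter> ?Y = _\<close> by (simp add: AA_def P2_alt)
  have "card (?X \<union> ?Y) + card (?X \<inter> ?Y) = card ?X + card ?Y" using card_Un_Int[of ?X ?Y] by simp
  moreover have "card (?X \<union> ?Y) \<le> card {1..n}" by (rule card_mono) auto
  ultimately show "P1 n \<sigma> + P2 n \<sigma> \<le> n + AA n \<sigma>" using \<open>?X \<inter> ?Y = _\<close>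
    by (simp add: AA_def P1_def P2_alt)
qed

definition cfg :: "nat \<Rightarrow> nat \<Rightarrow> nat \<Rightarrow> nat \<Rightarrow> int" where
  "cfg n q1 q2 i = (if i \<in> {1..n} then (if i \<le> q1 then 1 else -1)
      else if i \<in> {n+1..2*n} then (if i \<le> n + q2 then 1 else -1) else 0)"

lemma cfg_config: "config n (cfg n q1 q2)"
  by (auto simp: config_def cfg_def Vtx_def)

lemma cfg_counts:
  assumes "q1 \<le> n" "q2 \<le> n"
  shows "P1 n (cfg n q1 q2) = q1" "P2 n (cfg n q1 q2) = q2" "AA n (cfg n q1 q2) = min q1 q2"
proof -
  have "{i\<in>{1..n}. cfg n q1 q2 i = 1} = {1..q1}" using assms by (auto simp: cfg_def)
  then show "P1 n (cfg n q1 q2) = q1" by (simp add: P1_def)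
  have "{i\<in>{1..n}. cfg n q1 q2 (i+n) = 1} = {1..q2}" using assms by (auto simp: cfg_def)
  then show "P2 n (cfg n q1 q2) = q2" by (simp add: P2_alt)
  have "{i\<in>{1..n}. cfg n q1 q2 i = 1 \<and> cfg n q1 q2 (i+n) = 1} = {1..min q1 q2}" using assms by (auto simp: cfg_def)
  then show "AA n (cfg n q1 q2) = min q1 q2" by (simp add: AA_def)
qed

lemma FF_rel: "FF n e h q1 q2 b = FF n e h (q1+q2) 0 0 + 4 * real q1 * real q2 - 4 * e * real b"
  unfolding FF_def power2_eq_square by (simp add: field_simps)

lemma lowerA:
  assumes "config n \<sigma>" "e \<le> 1"
  shows "FF n e h (PP n \<sigma>) 0 0 \<le> Ham n e h \<sigma>"
proof -
  note cb = count_bounds[OF assms(1)]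
  define q1 q2 b where "q1 = P1 n \<sigma>" "q2 = P2 n \<sigma>" "b = AA n \<sigma>"
  have "0 \<le> (1 - e) * real b" using assms(2) by simp
  then have "e * real b \<le> real b" by (simp add: algebra_simps)
  moreover have "real b \<le> real q1 * real q2"
  proof (cases "b = 0")
    case False
    then have "q2 \<ge> 1" using cb(4) q1_q2_b_def by simp
    then have "real q1 \<le> real q1 * real q2" by (simp add: mult_le_cancel_left1)
    then show ?thesis using cb(3) q1_q2_b_def by linarith
  qed simp
  ultimately show ?thesis
    unfolding ham_formula[OF assms(1)] PP_split using FF_rel[of n e h q1 q2 b] q1_q2_b_def by simp
qed

lemma lowerB:
  assumes "config n \<sigma>" "e \<le> 0" "n \<le> PP n \<sigma>"
  shows "FF n e h n (PP n \<sigma> - n) (PP n \<sigma> - n) \<le> Ham n e h \<sigma>"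
proof -
  note cb = count_bounds[OF assms(1)]
  define q1 q2 b where "q1 = P1 n \<sigma>" "q2 = P2 n \<sigma>" "b = AA n \<sigma>"
  define k where "k = PP n \<sigma> - n"
  have k: "real k = real q1 + real q2 - real n" "PP n \<sigma> = n + k"
    using assms(3) PP_split[of n \<sigma>] q1_q2_b_def k_def by auto
  have bk: "real k \<le> real b" using cb(5) k q1_q2_b_def by simp
  have "0 \<le> (real n - real q1) * (real n - real q2)" using cb(1,2) q1_q2_b_def by simp
  moreover have "real n * real k = real n * (real q1 + real q2 - real n)" using k by simp
  ultimately have qq: "real n * real k \<le> real q1 * real q2" by (simp add: algebra_simps)
  have "- e * real k \<le> - e * real b" using bk assms(2) by (intro mult_left_mono) auto
  then have eb: "- (e * real k) \<le> - (e * real b)" by simp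
  have H: "Ham n e h \<sigma> = FF n e h (n+k) 0 0 + 4 * (real q1 * real q2) - 4 * (e * real b)"
    using ham_formula[OF assms(1)] FF_rel[of n e h q1 q2 b] q1_q2_b_def PP_split[of n \<sigma>] k(2) by simp
  have G: "FF n e h n k k = FF n e h (n+k) 0 0 + 4 * (real n * real k) - 4 * (e * real k)"
    using FF_rel[of n e h n k k] by simp
  show ?thesis using H G qq eb unfolding k_def[symmetric] by linarith
qed



lemma config_outside: "config n a \<Longrightarrow> i \<notin> Vtx n \<Longrightarrow> a i = 0"
  by (simp add: config_def)

lemma diff_finite: "config n a \<Longrightarrow> config n b \<Longrightarrow> {i. a i \<noteq> b i} \<subseteq> Vtx n"
proof
  fix i assume "config n a" "config n b" "i \<in> {i. a i \<noteq> b i}"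
  then show "i \<in> Vtx n" using config_outside[of n a i] config_outside[of n b i] by (cases "i \<in> Vtx n") auto
qed

lemma path_exists_aux:
  "\<forall>a. config n a \<longrightarrow> config n b \<longrightarrow> card {i. a i \<noteq> b i} = m \<longrightarrow> (\<exists>\<omega>. is_path n \<omega> a b)"
proof (induction m)
  case 0
  show ?case
  proof (intro allI impI)
    fix a assume a: "config n a" "config n b" "card {i. a i \<noteq> b i} = 0"
    have "finite {i. a i \<noteq> b i}" using diff_finite[OF a(1,2)] finite_subset by (auto simp: Vtx_def)
    then have "{i. a i \<noteq> b i} = {}" using a(3) by simp
    then have "a = b" by auto
    then show "\<exists>\<omega>. is_path n \<omega> a b" using a by (intro exI[of _ "[a]"]) (auto simp: is_path_def)
  qed
next
  case (Suc m)
  show ?case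
  proof (intro allI impI)
    fix a assume a: "config n a" "config n b" "card {i. a i \<noteq> b i} = Suc m"
    have fin: "finite {i. a i \<noteq> b i}" using diff_finite[OF a(1,2)] finite_subset by (auto simp: Vtx_def)
    have "{i. a i \<noteq> b i} \<noteq> {}" using a(3) by (metis card.empty Zero_not_Suc)
    then obtain j where j: "a j \<noteq> b j" by auto
    then have jV: "j \<in> Vtx n" using diff_finite[OF a(1,2)] by auto
    define a' where "a' = a(j := b j)"
    have ca': "config n a'" using a(1,2) jV unfolding config_def a'_def by auto
    have "{i. a' i \<noteq> b i} = {i. a i \<noteq> b i} - {j}" by (auto simp: a'_def)
    then have "card {i. a' i \<noteq> b i} = m" using a(3) fin j by simp
    then obtain \<omega> where \<omega>: "is_path n \<omega> a' b" using Suc.IH ca' a(2) by blast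
    have dj: "{i. a i \<noteq> a' i} = {j}" using j by (auto simp: a'_def)
    have "is_path n (a # \<omega>) a b"
      unfolding is_path_def
    proof (intro conjI allI impI)
      show "last (a # \<omega>) = b" using \<omega> by (simp add: is_path_def)
      show "\<forall>\<zeta>\<in>set (a # \<omega>). config n \<zeta>" using \<omega> a(1) by (simp add: is_path_def)
      fix k assume k: "Suc k < length (a # \<omega>)"
      have w0: "\<omega> ! 0 = a'" and wne: "\<omega> \<noteq> []" using \<omega> by (auto simp: is_path_def hd_conv_nth[symmetric])
      have ws: "\<forall>k. Suc k < length \<omega> \<longrightarrow> card {i. (\<omega> ! k) i \<noteq> (\<omega> ! Suc k) i} = 1"
        using \<omega> by (simp add: is_path_def)
      show "card {i. ((a # \<omega>) ! k) i \<noteq> ((a # \<omega>) ! Suc k) i} = 1"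
      proof (cases k)
        case 0
        then show ?thesis using w0 dj by simp
      next
        case (Suc k')
        then show ?thesis using ws k by simp
      qed
    qed simp_all
    then show "\<exists>\<omega>. is_path n \<omega> a b" by blast
  qed
qed

lemma path_exists: "config n a \<Longrightarrow> config n b \<Longrightarrow> \<exists>\<omega>. is_path n \<omega> a b"
  using path_exists_aux[of n b "card {i. a i \<noteq> b i}"] by simp



lemma step_count:
  assumes "config n x" "config n y" "card {i. x i \<noteq> y i} = 1"
  shows "PP n y \<le> PP n x + 1"
proof -
  obtain j where j: "{i. x i \<noteq> y i} = {j}" using assms(3) card_1_singletonE by blast
  have jj: "x i = y i" if "i \<noteq> j" for i
  proof (rule ccontr)
    assume "x i \<noteq> y i" then have "i \<in> {i. x i \<noteq> y i}" by simp
    then show False using j that by simp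
  qed
  have "{i\<in>Vtx n. y i = 1} \<subseteq> insert j {i\<in>Vtx n. x i = 1}" using jj by force
  then have "card {i\<in>Vtx n. y i = 1} \<le> card (insert j {i\<in>Vtx n. x i = 1})"
    by (intro card_mono) (auto simp: Vtx_def)
  also have "\<dots> \<le> card {i\<in>Vtx n. x i = 1} + 1" by (simp add: card_insert_if Vtx_def)
  finally show ?thesis by (simp add: PP_def)
qed

lemma ivt_int:
  fixes g :: "nat \<Rightarrow> int"
  shows "g 0 \<le> c \<Longrightarrow> c \<le> g m \<Longrightarrow> (\<forall>k<m. \<bar>g (Suc k) - g k\<bar> \<le> 1) \<Longrightarrow> \<exists>k\<le>m. g k = c"
proof (induction m)
  case 0
  then show ?case by auto
next
  case (Suc m)
  show ?case
  proof (cases "c \<le> g m")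
    case True
    then show ?thesis using Suc.IH Suc.prems by (metis le_SucI less_SucI)
  next
    case False
    then have "\<bar>g (Suc m) - g m\<bar> \<le> 1" "g m < c" "c \<le> g (Suc m)" using Suc.prems by auto
    then have "g (Suc m) = c" by linarith
    then show ?thesis by blast
  qed
qed



lemma path_crosses:
  assumes "is_path n \<omega> a b" "PP n a \<le> p" "p \<le> PP n b"
  shows "\<exists>\<zeta>\<in>set \<omega>. PP n \<zeta> = p"
proof -
  define g where "g k = int (PP n (\<omega> ! k))" for k
  define m where "m = length \<omega> - 1"
  have ne: "\<omega> \<noteq> []" using assms(1) by (simp add: is_path_def)
  have g0: "g 0 \<le> int p" using assms(1,2) ne by (simp add: g_def is_path_def hd_conv_nth)
  have gm: "int p \<le> g m" using assms(1,3) ne by (simp add: g_def m_def is_path_def last_conv_nth)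
  have st: "\<forall>k<m. \<bar>g (Suc k) - g k\<bar> \<le> 1"
  proof (intro allI impI)
    fix k assume k: "k < m"
    then have k1: "Suc k < length \<omega>" by (simp add: m_def)
    have c1: "config n (\<omega> ! k)" "config n (\<omega> ! Suc k)" using assms(1) k1 by (auto simp: is_path_def)
    have d: "card {i. (\<omega> ! k) i \<noteq> (\<omega> ! Suc k) i} = 1" using assms(1) k1 by (simp add: is_path_def)
    have "{i. (\<omega> ! Suc k) i \<noteq> (\<omega> ! k) i} = {i. (\<omega> ! k) i \<noteq> (\<omega> ! Suc k) i}" by auto
    then have d': "card {i. (\<omega> ! Suc k) i \<noteq> (\<omega> ! k) i} = 1" using d by simp
    show "\<bar>g (Suc k) - g k\<bar> \<le> 1" using step_count[OF c1 d] step_count[OF c1(2,1) d'] by (simp add: g_def)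
  qed
  obtain k where "k \<le> m" "g k = int p" using ivt_int[OF g0 gm st] by blast
  moreover have "k < length \<omega>" using \<open>k \<le> m\<close> ne unfolding m_def by (cases "length \<omega>") auto
  ultimately show ?thesis by (intro bexI[of _ "\<omega> ! k"]) (auto simp: g_def)
qed

lemma barrier:
  assumes "config n \<zeta>" "config n \<tau>" "Ham n e h \<tau> < Ham n e h \<zeta>" "PP n \<zeta> \<le> p"
    and low: "\<And>\<eta>. config n \<eta> \<Longrightarrow> Ham n e h \<eta> < Ham n e h \<zeta> \<Longrightarrow> p \<le> PP n \<eta>"
    and bar: "\<And>\<sigma>. config n \<sigma> \<Longrightarrow> PP n \<sigma> = p \<Longrightarrow> B \<le> Ham n e h \<sigma>"
  shows "ereal (B - Ham n e h \<zeta>) \<le> Gamma_m n e h"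
proof -
  define L where "L = {\<eta>\<in>Xcfg n. Ham n e h \<eta> < Ham n e h \<zeta>}"
  have tL: "\<tau> \<in> L" using assms(2,3) by (simp add: L_def Xcfg_def)
  have phi: "B \<le> Phi n e h \<zeta> \<eta>" if "\<eta> \<in> L" for \<eta>
  proof -
    have c\<eta>: "config n \<eta>" "Ham n e h \<eta> < Ham n e h \<zeta>" using that by (auto simp: L_def Xcfg_def)
    obtain \<omega>0 where "is_path n \<omega>0 \<zeta> \<eta>" using path_exists[OF assms(1) c\<eta>(1)] by blast
    show ?thesis unfolding Phi_def
    proof (rule cInf_greatest)
      show "{Max (Ham n e h ` set \<omega>) |\<omega>. is_path n \<omega> \<zeta> \<eta>} \<noteq> {}" using \<open>is_path n \<omega>0 \<zeta> \<eta>\<close> by blast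
      fix x assume "x \<in> {Max (Ham n e h ` set \<omega>) |\<omega>. is_path n \<omega> \<zeta> \<eta>}"
      then obtain \<omega> where \<omega>: "is_path n \<omega> \<zeta> \<eta>" "x = Max (Ham n e h ` set \<omega>)" by blast
      obtain s where s: "s \<in> set \<omega>" "PP n s = p"
        using path_crosses[OF \<omega>(1) assms(4) low[OF c\<eta>]] by blast
      have "config n s" using \<omega>(1) s(1) by (simp add: is_path_def)
      then have "B \<le> Ham n e h s" using bar s(2) by blast
      also have "\<dots> \<le> x" using s(1) \<omega>(2) by simp
      finally show "B \<le> x" .
    qed
  qed
  have "B \<le> PhiSet n e h \<zeta> L" unfolding PhiSet_def
    by (rule cInf_greatest) (use tL phi in auto)
  then have "ereal (B - Ham n e h \<zeta>) \<le> stab n e h \<zeta>"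
    using tL by (auto simp: stab_def L_def Let_def)
  also have "stab n e h \<zeta> \<le> Gamma_m n e h"
  proof -
    have "\<zeta> \<in> Xcfg n - Xs n e h" using assms(1-3) by (auto simp: Xcfg_def Xs_def)
    then show ?thesis unfolding Gamma_m_def by (intro Sup_upper) auto
  qed
  finally show ?thesis .
qed



lemma cfg_ham: "q1 \<le> n \<Longrightarrow> q2 \<le> n \<Longrightarrow> Ham n e h (cfg n q1 q2) = FF n e h q1 q2 (min q1 q2)"
  using ham_formula[OF cfg_config] cfg_counts by simp

lemma cfg_PP: "q1 \<le> n \<Longrightarrow> q2 \<le> n \<Longrightarrow> PP n (cfg n q1 q2) = q1 + q2"
  using PP_split cfg_counts by simp

lemma Cset_iff: "\<sigma> \<in> Cset n a b c \<longleftrightarrow> config n \<sigma> \<and> P1 n \<sigma> = a \<and> P2 n \<sigma> = b \<and> AA n \<sigma> = c"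
  by (simp add: Cset_def P1_def P2_def AA_def)

lemma Cp_iff: "\<sigma> \<in> Cp n q \<longleftrightarrow> config n \<sigma> \<and> PP n \<sigma> = q"
  by (simp add: Cp_def PP_def)

lemma key_int: fixes x :: int and t :: real
  assumes "-1 \<le> t" "t \<le> 1" shows "0 \<le> real_of_int x * (real_of_int x + t)"
proof (cases "x \<ge> 1")
  case True
  then have "real_of_int x \<ge> 1" by simp
  then show ?thesis using assms by simp
next
  case False
  show ?thesis
  proof (cases "x = 0")
    case False
    then have "x \<le> -1" using \<open>\<not> x \<ge> 1\<close> by simp
    then have "real_of_int x \<le> -1" by simp
    then have "real_of_int x + t \<le> 0" using assms by simp
    then show ?thesis using \<open>real_of_int x \<le> -1\<close> by (simp add: mult_nonpos_nonpos)
  qed simp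
qed

lemma G_diff: "FF n e h p 0 0 - FF n e h q 0 0 = 2*(real p - real q)*(real n + e - h - real p - real q)"
  unfolding FF_def power2_eq_square by (simp add: field_simps)

lemma K_diff: "FF n e h n k' k' - FF n e h n k k = 2*(real k' - real k)*(real n - e - h - real k' - real k)"
  unfolding FF_def power2_eq_square by (simp add: field_simps)

lemma GK: "k \<le> n \<Longrightarrow> FF n e h (n-k) 0 0 - FF n e h n k k = 4 * real k * h"
  unfolding FF_def power2_eq_square by (simp add: of_nat_diff field_simps)

lemma G_max:
  assumes "-1 \<le> real n - 2*real p + e - h" "real n - 2*real p + e - h \<le> 1"
  shows "FF n e h q 0 0 \<le> FF n e h p 0 0"
proof -
  define d where "d = int p - int q"
  have "FF n e h p 0 0 - FF n e h q 0 0 = 2 * (real_of_int d * (real_of_int d + (real n - 2*real p + e - h)))"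
    unfolding G_diff d_def by (simp add: algebra_simps)
  moreover have "0 \<le> real_of_int d * (real_of_int d + (real n - 2*real p + e - h))"
    using key_int assms by blast
  ultimately show ?thesis by simp
qed

lemma K_max:
  assumes "-1 \<le> real n - 2*real k - e - h" "real n - 2*real k - e - h \<le> 1"
  shows "FF n e h n j j \<le> FF n e h n k k"
proof -
  define d where "d = int k - int j"
  have "FF n e h n k k - FF n e h n j j = 2 * (real_of_int d * (real_of_int d + (real n - 2*real k - e - h)))"
    unfolding K_diff d_def by (simp add: algebra_simps)
  moreover have "0 \<le> real_of_int d * (real_of_int d + (real n - 2*real k - e - h))"
    using key_int assms by blast
  ultimately show ?thesis by simp
qed



lemma partA:
  assumes n2: "n \<ge> 2" and h0: "0 < h" and h1: "h \<le> 1" and e0: "0 \<le> e" and e1: "e \<le> 1"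
  shows "(let p = pstar1 n e h; U = (\<Union>q\<in>{0..2*n}. Mp n e h q); S = Cset n p 0 0 \<union> Cset n 0 p 0 in
        S \<noteq> {} \<and> (\<forall>\<sigma>\<in>S. \<sigma> \<in> U \<and> (\<forall>\<tau>\<in>U. Ham n e h \<tau> \<le> Ham n e h \<sigma>)))
      \<and> Gamma_m n e h \<ge> ereal (Gamma1 n e h)"
proof -
  define p where "p = pstar1 n e h"
  define G where "G q = FF n e h q 0 0" for q
  have pfacts: "p \<le> n \<and> -1 \<le> real n - 2*real p + e - h \<and> real n - 2*real p + e - h \<le> 1
      \<and> Gamma1 n e h = G p - G 0"
  proof (cases "even n")
    case True
    then obtain m where m: "n = 2*m" by blast
    then have pm: "p = m" by (simp add: p_def pstar1_def)
    show ?thesis using m pm True h0 h1 e0 e1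
      by (simp add: Gamma1_def G_def FF_def power2_eq_square field_simps)
  next
    case False
    then obtain m where m: "n = 2*m+1" using oddE by blast
    show ?thesis
    proof (cases "h \<le> e")
      case True
      then have pm: "p = m+1" using m False by (simp add: p_def pstar1_def)
      show ?thesis using m pm True False h0 h1 e0 e1 n2
        by (simp add: Gamma1_def G_def FF_def power2_eq_square field_simps)
    next
      case hf: False
      then have pm: "p = m" using m False by (simp add: p_def pstar1_def)
      show ?thesis using m pm hf False h0 h1 e0 e1
        by (simp add: Gamma1_def G_def FF_def power2_eq_square field_simps)
    qed
  qed
  then have pn: "p \<le> n" and gam: "Gamma1 n e h = G p - G 0"
    and Gmax: "\<And>q. G q \<le> G p" using G_max unfolding G_def by auto
  define S where "S = Cset n p 0 0 \<union> Cset n 0 p 0"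
  define U where "U = (\<Union>q\<in>{0..2*n}. Mp n e h q)"
  have Smem: "config n \<sigma> \<and> PP n \<sigma> = p \<and> Ham n e h \<sigma> = G p" if "\<sigma> \<in> S" for \<sigma>
  proof -
    have c: "config n \<sigma>" using that by (auto simp: S_def Cset_iff)
    have "Ham n e h \<sigma> = FF n e h p 0 0 \<or> Ham n e h \<sigma> = FF n e h 0 p 0"
      using that ham_formula[OF c] by (auto simp: S_def Cset_iff)
    moreover have "FF n e h 0 p 0 = FF n e h p 0 0" using FF_rel[of n e h 0 p 0] by simp
    ultimately show ?thesis using c that PP_split[of n \<sigma>] by (auto simp: S_def Cset_iff G_def)
  qed
  have Uub: "Ham n e h \<tau> \<le> G p" if tU: "\<tau> \<in> U" for \<tau>
  proof -
    obtain q where q: "q \<le> 2*n" "\<tau> \<in> Mp n e h q" using tU by (auto simp: U_def)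
    obtain w where w: "w \<in> Cp n q" "Ham n e h w \<le> G p"
    proof (cases "q \<le> n")
      case True
      have "cfg n q 0 \<in> Cp n q" using True by (simp add: Cp_iff cfg_config cfg_PP)
      moreover have "Ham n e h (cfg n q 0) \<le> G p" using True Gmax[of q] by (simp add: cfg_ham G_def)
      ultimately show ?thesis using that by blast
    next
      case False
      have "cfg n n (q-n) \<in> Cp n q" using False q(1) by (simp add: Cp_iff cfg_config cfg_PP)
      moreover have "Ham n e h (cfg n n (q-n)) \<le> G p"
      proof -
        have "Ham n e h (cfg n n (q-n)) = FF n e h n (q-n) (q-n)" using False q(1) by (simp add: cfg_ham)
        also have "\<dots> \<le> G (n - (q-n))"
        proof -
          have d: "G (n-(q-n)) - FF n e h n (q-n) (q-n) = 4*real(q-n)*h"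
            using GK[of "q-n" n e h] q(1) unfolding G_def by simp
          have "0 \<le> 4*real(q-n)*h" using h0 by simp
          then show ?thesis using d by linarith
        qed
        also have "\<dots> \<le> G p" by (rule Gmax)
        finally show ?thesis .
      qed
      ultimately show ?thesis using that by blast
    qed
    then show ?thesis using q(2) by (auto simp: Mp_def)
  qed
  have part1: "S \<noteq> {} \<and> (\<forall>\<sigma>\<in>S. \<sigma> \<in> U \<and> (\<forall>\<tau>\<in>U. Ham n e h \<tau> \<le> Ham n e h \<sigma>))"
  proof (intro conjI ballI)
    have "cfg n p 0 \<in> S" using pn by (simp add: S_def Cset_iff cfg_config cfg_counts)
    then show "S \<noteq> {}" by blast
  next
    fix \<sigma> assume s: "\<sigma> \<in> S"
    note sm = Smem[OF s]
    have "\<forall>\<tau>\<in>Cp n p. Ham n e h \<sigma> \<le> Ham n e h \<tau>"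
    proof
      fix \<tau> assume "\<tau> \<in> Cp n p"
      then have "config n \<tau>" "PP n \<tau> = p" by (auto simp: Cp_iff)
      then show "Ham n e h \<sigma> \<le> Ham n e h \<tau>" using lowerA[of n \<tau> e h] e1 sm by (simp add: G_def)
    qed
    then have "\<sigma> \<in> Mp n e h p" unfolding Mp_def using sm by (auto simp: Cp_iff)
    then show "\<sigma> \<in> U" using pn by (auto simp: U_def)
    fix \<tau> assume "\<tau> \<in> U"
    then show "Ham n e h \<tau> \<le> Ham n e h \<sigma>" using Uub sm by simp
  qed
  have part2: "ereal (G p - G 0) \<le> Gamma_m n e h"
  proof -
    have z: "Ham n e h (cfg n 0 0) = G 0" "PP n (cfg n 0 0) = 0" by (simp_all add: cfg_ham cfg_PP G_def)
    have t: "Ham n e h (cfg n n n) < Ham n e h (cfg n 0 0)"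
      using h0 n2 by (simp add: cfg_ham FF_def power2_eq_square field_simps)
    have "ereal (G p - Ham n e h (cfg n 0 0)) \<le> Gamma_m n e h"
    proof (rule barrier[OF cfg_config cfg_config t])
      show "PP n (cfg n 0 0) \<le> p" using z by simp
    next
      fix \<eta> assume c: "config n \<eta>" and lt: "Ham n e h \<eta> < Ham n e h (cfg n 0 0)"
      show "p \<le> PP n \<eta>"
      proof (rule ccontr)
        assume "\<not> p \<le> PP n \<eta>"
        then have qp: "PP n \<eta> < p" by simp
        have "G 0 \<le> G (PP n \<eta>)"
        proof -
          have "0 \<le> real n - real (PP n \<eta>) - 1" using qp pn by simp
          moreover have "0 \<le> real (PP n \<eta>)" by simp
          ultimately have "0 \<le> 2 * real (PP n \<eta>) * (real n + e - h - real (PP n \<eta>))"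
            using e0 h1 by (intro mult_nonneg_nonneg) auto
          then show ?thesis using G_diff[of n e h "PP n \<eta>" 0] by (simp add: G_def)
        qed
        also have "\<dots> \<le> Ham n e h \<eta>" using lowerA[OF c e1] by (simp add: G_def)
        finally show False using lt z by simp
      qed
    next
      fix \<sigma> assume c: "config n \<sigma>" and "PP n \<sigma> = p"
      then show "G p \<le> Ham n e h \<sigma>" using lowerA[OF c e1] by (simp add: G_def)
    qed
    then show ?thesis using z by simp
  qed
  show ?thesis using part1 part2 gam unfolding Let_def S_def U_def p_def by simp
qed



lemma partB:
  assumes n2: "n \<ge> 2" and h0: "0 < h" and h1: "h \<le> 1" and e0: "e < 0" and eh: "-e < h" and e1: "-1 \<le> e"
  shows "(let p = pstar2 n; U = (\<Union>q\<in>{n..2*n}. Mp n e h q);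
           S = Cset n n (p - n) (p - n) \<union> Cset n (p - n) n (p - n) in
        S \<noteq> {} \<and> (\<forall>\<sigma>\<in>S. \<sigma> \<in> U \<and> (\<forall>\<tau>\<in>U. Ham n e h \<tau> \<le> Ham n e h \<sigma>)))
      \<and> Gamma_m n e h \<ge> ereal (Gamma2 n e h)"
proof -
  define K where "K k = FF n e h n k k" for k
  obtain m where pm: "pstar2 n = n + m" and mn: "2 * m \<le> n" "n \<le> 2*m + 1"
    and gam: "Gamma2 n e h = K m - K 0"
  proof (cases "even n")
    case True
    then obtain m where m: "n = 2*m" by blast
    have "pstar2 n = n + m" using m True by (simp add: pstar2_def)
    moreover have "Gamma2 n e h = K m - K 0" using m True
      by (simp add: Gamma2_def K_def FF_def power2_eq_square field_simps)
    ultimately show ?thesis using m by (intro that[of m]) simp_all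
  next
    case False
    then obtain m where m: "n = 2*m+1" using oddE by blast
    have "3 * n - 1 = 2 * (3*m+1)" using m by simp
    then have "pstar2 n = n + m" using m False by (simp add: pstar2_def)
    moreover have "Gamma2 n e h = K m - K 0" using m False
      by (simp add: Gamma2_def K_def FF_def power2_eq_square field_simps)
    ultimately show ?thesis using m by (intro that[of m]) simp_all
  qed
  have mle: "m \<le> n" using mn by simp
  have Kmax: "K j \<le> K m" for j
    unfolding K_def using mn e0 eh h1 by (intro K_max) auto
  define S where "S = Cset n n m m \<union> Cset n m n m"
  define U where "U = (\<Union>q\<in>{n..2*n}. Mp n e h q)"
  have Smem: "config n \<sigma> \<and> PP n \<sigma> = n + m \<and> Ham n e h \<sigma> = K m" if "\<sigma> \<in> S" for \<sigma>
  proof -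
    have c: "config n \<sigma>" using that by (auto simp: S_def Cset_iff)
    have "Ham n e h \<sigma> = FF n e h n m m \<or> Ham n e h \<sigma> = FF n e h m n m"
      using that ham_formula[OF c] by (auto simp: S_def Cset_iff)
    moreover have "FF n e h m n m = FF n e h n m m" using FF_rel[of n e h m n m] FF_rel[of n e h n m m]
      by (simp add: add.commute mult.commute)
    ultimately show ?thesis using c that PP_split[of n \<sigma>] by (auto simp: S_def Cset_iff K_def)
  qed
  have Uub: "Ham n e h \<tau> \<le> K m" if tU: "\<tau> \<in> U" for \<tau>
  proof -
    obtain q where q: "n \<le> q" "q \<le> 2*n" "\<tau> \<in> Mp n e h q" using tU by (auto simp: U_def)
    have "cfg n n (q-n) \<in> Cp n q" using q by (simp add: Cp_iff cfg_config cfg_PP)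
    moreover have "Ham n e h (cfg n n (q-n)) \<le> K m"
      using q Kmax[of "q-n"] by (simp add: cfg_ham K_def)
    ultimately show ?thesis using q(3) by (auto simp: Mp_def)
  qed
  have part1: "S \<noteq> {} \<and> (\<forall>\<sigma>\<in>S. \<sigma> \<in> U \<and> (\<forall>\<tau>\<in>U. Ham n e h \<tau> \<le> Ham n e h \<sigma>))"
  proof (intro conjI ballI)
    have "cfg n n m \<in> S" using mle by (simp add: S_def Cset_iff cfg_config cfg_counts)
    then show "S \<noteq> {}" by blast
  next
    fix \<sigma> assume s: "\<sigma> \<in> S"
    note sm = Smem[OF s]
    have "\<forall>\<tau>\<in>Cp n (n+m). Ham n e h \<sigma> \<le> Ham n e h \<tau>"
    proof
      fix \<tau> assume "\<tau> \<in> Cp n (n+m)"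
      then have "config n \<tau>" "PP n \<tau> = n + m" by (auto simp: Cp_iff)
      then show "Ham n e h \<sigma> \<le> Ham n e h \<tau>" using lowerB[of n \<tau> e h] e0 sm by (simp add: K_def)
    qed
    then have "\<sigma> \<in> Mp n e h (n+m)" unfolding Mp_def using sm by (auto simp: Cp_iff)
    then show "\<sigma> \<in> U" using mle by (auto simp: U_def)
    fix \<tau> assume "\<tau> \<in> U"
    then show "Ham n e h \<tau> \<le> Ham n e h \<sigma>" using Uub sm by simp
  qed
  have part2: "ereal (K m - K 0) \<le> Gamma_m n e h"
  proof -
    have z: "Ham n e h (cfg n n 0) = K 0" "PP n (cfg n n 0) = n" by (simp_all add: cfg_ham cfg_PP K_def)
    have t: "Ham n e h (cfg n n n) < Ham n e h (cfg n n 0)"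
    proof -
      have "0 < real n * (e + h)" using eh n2 by simp
      then show ?thesis by (simp add: cfg_ham FF_def power2_eq_square field_simps)
    qed
    have "ereal (K m - Ham n e h (cfg n n 0)) \<le> Gamma_m n e h"
    proof (rule barrier[OF cfg_config cfg_config t])
      show "PP n (cfg n n 0) \<le> n + m" using z by simp
    next
      fix \<eta> assume c: "config n \<eta>" and lt: "Ham n e h \<eta> < Ham n e h (cfg n n 0)"
      show "n + m \<le> PP n \<eta>"
      proof (rule ccontr)
        assume "\<not> n + m \<le> PP n \<eta>"
        then have qp: "PP n \<eta> < n + m" by simp
        have "K 0 \<le> Ham n e h \<eta>"
        proof (cases "PP n \<eta> \<le> n")
          case True
          have "0 \<le> (real n - real (PP n \<eta>)) * (real (PP n \<eta>) + h - e)"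
            using True e0 h0 by (intro mult_nonneg_nonneg) auto
          moreover have "FF n e h (PP n \<eta>) 0 0 - FF n e h n 0 0 = 2 * ((real n - real (PP n \<eta>)) * (real (PP n \<eta>) + h - e))"
            unfolding G_diff by (simp add: algebra_simps)
          moreover have "FF n e h (PP n \<eta>) 0 0 \<le> Ham n e h \<eta>" using lowerA[OF c] e1 e0 by simp
          ultimately show ?thesis by (simp add: K_def)
        next
          case False
          define k where "k = PP n \<eta> - n"
          have k: "real k = real (PP n \<eta>) - real n" "k < m" using False qp by (auto simp: k_def)
          have r: "real k + 1 \<le> real m" "2 * real m \<le> real n" using k(2) mn by linarith+
          have "0 \<le> real k * (real n - e - h - real k)"
            using r e0 h1 by (intro mult_nonneg_nonneg) auto
          moreover have "K k - K 0 = 2 * (real k * (real n - e - h - real k))"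
            unfolding K_def K_diff by (simp add: algebra_simps)
          moreover have "K k \<le> Ham n e h \<eta>" using lowerB[OF c] e0 False by (simp add: K_def k_def)
          ultimately show ?thesis by simp
        qed
        then show False using lt z by simp
      qed
    next
      fix \<sigma> assume c: "config n \<sigma>" and "PP n \<sigma> = n + m"
      then show "K m \<le> Ham n e h \<sigma>" using lowerB[OF c] e0 by (simp add: K_def)
    qed
    then show ?thesis using z by simp
  qed
  show ?thesis using part1 part2 gam pm unfolding Let_def S_def U_def by simp
qed


theorem proposition5p5:
  fixes n :: nat and \<epsilon> h :: real
  assumes "n \<ge> 2" and "0 < h" and "h \<le> 1" and "-1 \<le> \<epsilon>" and "\<epsilon> \<le> 1"
  shows
   "(0 \<le> \<epsilon> \<longrightarrow>
      (let p = pstar1 n \<epsilon> h; U = (\<Union>q\<in>{0..2*n}. Mp n \<epsilon> h q); S = Cset n p 0 0 \<union> Cset n 0 p 0 in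
        S \<noteq> {} \<and> (\<forall>\<sigma>\<in>S. \<sigma> \<in> U \<and> (\<forall>\<tau>\<in>U. Ham n \<epsilon> h \<tau> \<le> Ham n \<epsilon> h \<sigma>)))
      \<and> Gamma_m n \<epsilon> h \<ge> ereal (Gamma1 n \<epsilon> h))
  \<and> (0 < -\<epsilon> \<and> -\<epsilon> < h \<longrightarrow>
      (let p = pstar2 n; U = (\<Union>q\<in>{n..2*n}. Mp n \<epsilon> h q);
           S = Cset n n (p - n) (p - n) \<union> Cset n (p - n) n (p - n) in
        S \<noteq> {} \<and> (\<forall>\<sigma>\<in>S. \<sigma> \<in> U \<and> (\<forall>\<tau>\<in>U. Ham n \<epsilon> h \<tau> \<le> Ham n \<epsilon> h \<sigma>)))
      \<and> Gamma_m n \<epsilon> h \<ge> ereal (Gamma2 n \<epsilon> h))"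
  using partA[OF assms(1,2,3) _ assms(5)] partB[OF assms(1,2,3) _ _ assms(4)]
  by (metis neg_0_less_iff_less)

end
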